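(* Let $n$, $m$, and $k$ be any nonnegative integers. Then \[ \sum_{c\ge0} q^{c(c-1+k)} [2c+k]_q \genfrac{[}{]}{0pt}{}{2n+k}{n-c}_q\genfrac{[}{]}{0pt}{}{2m+k}{m-c}_q =\frac{[n+k]_q [m+k]_q}{[n+m+k]_q}\genfrac{[}{]}{0pt}{}{2n+k}{n+k}_q \genfrac{[}{]}{0pt}{}{2m+k}{m+k}_q. \]
   Context: Notation: $[n]_q=\frac{1-q^n}{1-q}$, $[n]_q!=[1]_q[2]_q\cdots[n]_q$, and $\genfrac{[}{]}{0pt}{}{n}{k}_q=\frac{[n]_q!}{[k]_q![n-k]_q!}$ denotes the $q$-binomial coefficient. *)

theory Defs
  imports Main
begin

definition qint :: "'a::field \<Rightarrow> nat \<Rightarrow> 'a" where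
  "qint q n = (1 - q ^ n) / (1 - q)"

definition qfact :: "'a::field \<Rightarrow> nat \<Rightarrow> 'a" where
  "qfact q n = (\<Prod>i\<in>{1..n}. qint q i)"

definition qbinom :: "'a::field \<Rightarrow> nat \<Rightarrow> int \<Rightarrow> 'a" where
  "qbinom q N j = (if 0 \<le> j \<and> j \<le> int N
      then qfact q N / (qfact q (nat j) * qfact q (N - nat j)) else 0)"

end

theory Submission
  imports Defs
begin

lemma qfact_Suc: "qfact q (Suc j) = qfact q j * qint q (Suc j)"
  unfolding qfact_def by (simp add: prod.nat_ivl_Suc' mult.commute)

lemma qint_nz:
  fixes q :: "'a::field"
  assumes g: "\<And>j::nat. j \<ge> 1 \<Longrightarrow> q ^ j \<noteq> 1" and "i \<ge> 1"
  shows "qint q i \<noteq> 0"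
proof -
  have "q \<noteq> 1" using g[of 1] by simp
  moreover have "q ^ i \<noteq> 1" using g assms(2) by blast
  ultimately show ?thesis unfolding qint_def by simp
qed

lemma qfact_nz:
  fixes q :: "'a::field"
  assumes g: "\<And>j::nat. j \<ge> 1 \<Longrightarrow> q ^ j \<noteq> 1"
  shows "qfact q i \<noteq> 0"
  unfolding qfact_def using qint_nz[OF g] by (auto simp: prod_zero_iff)

lemma qint_0[simp]: "qint q 0 = 0" by (simp add: qint_def)

lemma qbinom_step:
  fixes q :: "'a::field"
  assumes g: "\<And>j::nat. j \<ge> 1 \<Longrightarrow> q ^ j \<noteq> 1" and "j < N"
  shows "qbinom q N (int j) * qint q (N - j) = qbinom q N (int j + 1) * qint q (j+1)"
proof -
  obtain r where r: "N - j = Suc r" "N - Suc j = r" using assms(2)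
    by (metis Suc_diff_Suc)
  have e1: "nat (int j + 1) = Suc j" by simp
  have "qbinom q N (int j) = qfact q N / (qfact q j * qfact q (Suc r))"
    using assms(2) r by (simp add: qbinom_def)
  moreover have "qbinom q N (int j + 1) = qfact q N / (qfact q (Suc j) * qfact q r)"
    using assms(2) r by (simp add: qbinom_def e1)
  ultimately have x: "qbinom q N (int j) = qfact q N / (qfact q j * qfact q r * qint q (Suc r))"
     "qbinom q N (int j + 1) = qfact q N / (qfact q j * qint q (Suc j) * qfact q r)"
    by (simp_all add: qfact_Suc mult.assoc)
  have nz: "qint q (Suc r) \<noteq> 0" "qint q (Suc j) \<noteq> 0" using qint_nz[OF g] by auto
  show ?thesis unfolding x r(1) using nz by (simp add: field_simps)
qed

lemma qbinom_sym:
  fixes q :: "'a::field"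
  assumes "j \<le> N"
  shows "qbinom q N (int j) = qbinom q N (int (N - j))"
proof -
  have "nat (int (N - j)) = N - j" "N - (N - j) = j" using assms by auto
  thus ?thesis using assms by (simp add: qbinom_def mult.commute)
qed

lemma a_step:
  fixes q :: "'a::field"
  assumes g: "\<And>j::nat. j \<ge> 1 \<Longrightarrow> q ^ j \<noteq> 1"
  shows "qbinom q (2*n+k) (int n - int (Suc c)) * qint q (n + c + k + 1)
       = qbinom q (2*n+k) (int n - int c) * qint q (n - c)"
proof (cases "Suc c \<le> n")
  case True
  define j where "j = n - Suc c"
  have h: "j < 2*n+k" "2*n+k-j = n+c+k+1" "int n - int (Suc c) = int j"
     "int n - int c = int j + 1" "j + 1 = n - c"
    using True by (auto simp: j_def)
  have "qbinom q (2*n+k) (int j) * qint q (2*n+k-j) = qbinom q (2*n+k) (int j + 1) * qint q (j + 1)"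
    by (rule qbinom_step[OF g h(1)])
  then show ?thesis unfolding h(2) h(3) h(4) h(5) by (simp add: mult.commute)
next
  case False
  hence "int n - int (Suc c) < 0" by simp
  hence "qbinom q (2*n+k) (int n - int (Suc c)) = 0" by (simp add: qbinom_def)
  moreover have "n - c = 0" using False by simp
  ultimately show ?thesis by simp
qed

lemma qint_id:
  fixes q :: "'a::field"
  assumes "q \<noteq> 1" and that: "c \<le> n" "c \<le> m"
  shows "qint q (n+c+k) * qint q (m+c+k) - q^(2*c+k) * qint q (n-c) * qint q (m-c)
        = qint q (2*c+k) * qint q (n+m+k)"
proof -
  define a where "a = n - c"
  define b where "b = m - c"
  have ab: "n = c + a" "m = c + b" using that by (auto simp: a_def b_def)
  have d: "1 - q \<noteq> 0" using assms by simp
  define X where "X = q^c" define Y where "Y = q^k" define A where "A = q^a" define B where "B = q^b"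
  have x1: "n+c+k = c+c+a+k" "m+c+k = c+c+b+k" "2*c+k = c+c+k" "n-c = a" "m-c = b" "n+m+k = c+c+a+b+k"
    using ab by auto
  have e1: "q^(n+c+k) = X*X*A*Y" "q^(m+c+k) = X*X*B*Y" "q^(2*c+k) = X*X*Y" "q^(n-c) = A" "q^(m-c) = B"
     "q^(n+m+k) = X*X*A*B*Y"
    unfolding x1 X_def Y_def A_def B_def by (simp_all only: power_add)
  have "(1 - X*X*A*Y)*(1 - X*X*B*Y) - X*X*Y*(1-A)*(1-B) = (1 - X*X*Y)*(1 - X*X*A*B*Y)"
    by (simp add: algebra_simps)
  hence "(1 - X*X*A*Y)/(1-q)*((1 - X*X*B*Y)/(1-q)) - X*X*Y*((1-A)/(1-q))*((1-B)/(1-q)) = (1 - X*X*Y)/(1-q)*((1 - X*X*A*B*Y)/(1-q))"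
    using d by (simp add: divide_simps)
  thus ?thesis unfolding qint_def e1 .
qed

lemma alg_help:
  fixes x :: "'a::field"
  assumes "P*Q - E*R*S = Z*W"
  shows "x*Z*a*b*W = x*a*b*P*Q - x*E*(a*R)*(b*S)"
proof -
  have "x*Z*a*b*W = x*a*b*(Z*W)" by (simp add: ac_simps)
  also have "\<dots> = x*a*b*(P*Q - E*R*S)" using assms by simp
  also have "\<dots> = x*a*b*P*Q - x*E*(a*R)*(b*S)" by (simp add: algebra_simps)
  finally show ?thesis .
qed
theorem lemma3p5:
  fixes q :: "'a::field" and n m k :: nat
  assumes q_generic: "\<And>j::nat. j \<ge> 1 \<Longrightarrow> q ^ j \<noteq> 1"
  shows "(\<Sum>c\<le>n + m. q ^ (c * (c - 1 + k)) * qint q (2*c + k)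
            * qbinom q (2*n + k) (int n - int c) * qbinom q (2*m + k) (int m - int c))
         = qint q (n + k) * qint q (m + k) / qint q (n + m + k)
            * qbinom q (2*n + k) (int (n + k)) * qbinom q (2*m + k) (int (m + k))"
proof -
  define a where "a c = qbinom q (2*n + k) (int n - int c)" for c
  define b where "b c = qbinom q (2*m + k) (int m - int c)" for c
  define T where "T c = q ^ (c * (c - 1 + k)) * a c * b c * qint q (n+c+k) * qint q (m+c+k)" for c
  have q1: "q \<noteq> 1" using q_generic[of 1] by simp
  have key: "q ^ (c * (c - 1 + k)) * qint q (2*c + k) * a c * b c * qint q (n+m+k)
        = T c - T (Suc c)" for c
  proof -
    have sa: "a (Suc c) * qint q (n + c + k + 1) = a c * qint q (n - c)"
      unfolding a_def by (rule a_step[OF q_generic])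
    have sb: "b (Suc c) * qint q (m + c + k + 1) = b c * qint q (m - c)"
      unfolding b_def by (rule a_step[OF q_generic])
    have ex: "Suc c * (Suc c - 1 + k) = c * (c - 1 + k) + (2*c+k)"
      by (cases c) (auto simp: algebra_simps)
    have "T (Suc c) = q ^ (c * (c - 1 + k)) * q^(2*c+k) * (a (Suc c) * qint q (n + c + k + 1))
             * (b (Suc c) * qint q (m + c + k + 1))"
      unfolding T_def ex by (simp add: power_add algebra_simps)
    also have "\<dots> = q ^ (c * (c - 1 + k)) * q^(2*c+k) * (a c * qint q (n - c)) * (b c * qint q (m - c))"
      using sa sb by simp
    finally have TS: "T (Suc c) = \<dots>" .
    show ?thesis
    proof (cases "c \<le> n \<and> c \<le> m")
      case True
      show ?thesis unfolding TS unfolding T_def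
        by (rule alg_help[OF qint_id[OF q1]]) (use True in auto)
    next
      case False
      hence "a c = 0 \<or> b c = 0" by (auto simp: a_def b_def qbinom_def)
      thus ?thesis unfolding TS unfolding T_def by auto
    qed
  qed
  have "(\<Sum>c\<le>n + m. q ^ (c * (c - 1 + k)) * qint q (2*c + k) * a c * b c) * qint q (n+m+k)
      = (\<Sum>c\<le>n + m. T c - T (Suc c))"
    unfolding sum_distrib_right using key by (intro sum.cong) auto
  also have "\<dots> = T 0 - T (Suc (n+m))" by (rule sum_telescope)
  also have "T (Suc (n+m)) = 0" by (simp add: T_def a_def qbinom_def)
  finally have m0: "(\<Sum>c\<le>n + m. q ^ (c * (c - 1 + k)) * qint q (2*c + k) * a c * b c) * qint q (n+m+k) = T 0" by simp
  have a0: "a 0 = qbinom q (2*n + k) (int (n + k))"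
    unfolding a_def using qbinom_sym[of n "2*n+k" q] by simp
  have b0: "b 0 = qbinom q (2*m + k) (int (m + k))"
    unfolding b_def using qbinom_sym[of m "2*m+k" q] by simp
  have main: "(\<Sum>c\<le>n + m. q ^ (c * (c - 1 + k)) * qint q (2*c + k) * a c * b c) * qint q (n+m+k)
     = qbinom q (2*n + k) (int (n + k)) * qbinom q (2*m + k) (int (m + k)) * qint q (n+k) * qint q (m+k)"
    unfolding m0 T_def a0 b0 by simp
  show ?thesis
  proof (cases "n + m + k = 0")
    case True
    thus ?thesis by simp
  next
    case False
    hence "qint q (n+m+k) \<noteq> 0" using qint_nz[OF q_generic, of "n+m+k"] by linarith
    with main show ?thesis
      unfolding a_def b_def by (simp add: field_simps)
  qed
qed

end
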